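(* Let $\mathbf{o}_1,\dots,\mathbf{o}_Q\in\mathbb{R}^2$ be fixed, $\mathbf{x},\mathbf{v}\in\mathbb{R}^2$ with $\mathbf{v}\neq\mathbf{0}$, and suppose $\mathbf{x}+t\mathbf{v}\neq\mathbf{o}_q$ for all $t\ge1$ and all $q$. Let $\bm{l}_q=\mathbf{x}-\mathbf{o}_q$, $\mathbf{d}_{t,q}=\bm{l}_q+t\mathbf{v}$, $d_{t,q}=\|\mathbf{d}_{t,q}\|$, $s_{T,q}^{(n)}=\sum_{t=1}^T t^n/d_{t,q}^4$, $\mathbf{P}_v^\perp=\mathbf{I}-\mathbf{v}\mathbf{v}^{\mathrm T}/\|\mathbf{v}\|^2$, and $$\mathbf{A}_{T,v}=\sum_{q=1}^Q\Big[s_{T,q}^{(2)}(\bm{l}_q^{\mathrm T}\bm{l}_q\mathbf{I}-\bm{l}_q\bm{l}_q^{\mathrm T})+s_{T,q}^{(3)}(2\mathbf{v}^{\mathrm T}\bm{l}_q\mathbf{I}-\bm{l}_q\mathbf{v}^{\mathrm T}-\mathbf{v}\bm{l}_q^{\mathrm T})+s_{T,q}^{(4)}(\|\mathbf{v}\|^2\mathbf{I}-\mathbf{v}\mathbf{v}^{\mathrm T})\Big].$$ Then, as $T\to\infty$, $\lambda_{\min}(\mathbf{A}_{T,v})-\sum_{q=1}^Q s_{T,q}^{(2)}\|\mathbf{P}_v^\perp\bm{l}_q\|^2\to0$ and $\lambda_{\max}(\mathbf{A}_{T,v})\big/\big(\sum_{q=1}^Q s_{T,q}^{(4)}\|\mathbf{v}\|^2\big)\to1$.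 *)

theory Defs
  imports "HOL-Analysis.Analysis"
begin

definition outer :: "real^'n \<Rightarrow> real^'m \<Rightarrow> real^'m^'n" where
  "outer a b = (\<chi> i j. a $ i * b $ j)"

definition real_eigenvalues :: "real^'n^'n \<Rightarrow> real set" where
  "real_eigenvalues M = {m. \<exists>y. y \<noteq> 0 \<and> M *v y = scaleR m y}"

definition lambda_min :: "real^'n^'n \<Rightarrow> real" where
  "lambda_min M = Min (real_eigenvalues M)"

definition lambda_max :: "real^'n^'n \<Rightarrow> real" where
  "lambda_max M = Max (real_eigenvalues M)"

end

theory Submission
  imports Defs "HOL-Real_Asymp.Real_Asymp"
begin


lemma outer_mult: "outer a b *v y = (b \<bullet> y) *\<^sub>R a"
  by (simp add: vec_eq_iff outer_def matrix_vector_mult_def inner_vec_def sum_distrib_left mult_ac)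

lemma vec2_eq_0: "(y::real^2) = 0 \<longleftrightarrow> y$1 = 0 \<and> y$2 = 0"
  by (auto simp: vec_eq_iff forall_2)

lemma mv2: "((M::real^2^2) *v y)$1 = M$1$1*y$1 + M$1$2*y$2"
           "((M::real^2^2) *v y)$2 = M$2$1*y$1 + M$2$2*y$2"
  by (simp_all add: matrix_vector_mult_def sum_2)

lemma inner2: "(a::real^2) \<bullet> b = a$1*b$1 + a$2*b$2"
  by (simp add: inner_vec_def sum_2)

lemma eig_iff:
  fixes M :: "real^2^2"
  assumes sym: "M$1$2 = M$2$1"
  shows "m \<in> real_eigenvalues M \<longleftrightarrow> (M$1$1 - m)*(M$2$2 - m) = (M$1$2)^2"
proof -
  define p where "p = M$1$1"
  define r where "r = M$1$2"
  define u where "u = M$2$2"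
  have r2: "M$2$1 = r" using sym r_def by simp
  have "m \<in> real_eigenvalues M \<longleftrightarrow> (\<exists>y1 y2. (y1 \<noteq> 0 \<or> y2 \<noteq> 0) \<and> p*y1 + r*y2 = m*y1 \<and> r*y1 + u*y2 = m*y2)"
  proof
    assume "m \<in> real_eigenvalues M"
    then obtain y where y: "y \<noteq> 0" "M *v y = m *\<^sub>R y" by (auto simp: real_eigenvalues_def)
    then have "(M *v y)$1 = m * y$1" "(M *v y)$2 = m * y$2" by simp_all
    then show "\<exists>y1 y2. (y1 \<noteq> 0 \<or> y2 \<noteq> 0) \<and> p*y1 + r*y2 = m*y1 \<and> r*y1 + u*y2 = m*y2"
      using y(1) by (intro exI[of _ "y$1"] exI[of _ "y$2"]) (auto simp: mv2 p_def r_def u_def r2 vec2_eq_0)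
  next
    assume "\<exists>y1 y2. (y1 \<noteq> 0 \<or> y2 \<noteq> 0) \<and> p*y1 + r*y2 = m*y1 \<and> r*y1 + u*y2 = m*y2"
    then obtain y1 y2 where h: "y1 \<noteq> 0 \<or> y2 \<noteq> 0" "p*y1 + r*y2 = m*y1" "r*y1 + u*y2 = m*y2" by blast
    define y :: "real^2" where "y = vector [y1, y2]"
    have "y \<noteq> 0" using h(1) by (simp add: y_def vec2_eq_0)
    moreover have "M *v y = m *\<^sub>R y"
      using h(2,3) by (simp add: vec_eq_iff forall_2 mv2 y_def p_def r_def u_def r2)
    ultimately show "m \<in> real_eigenvalues M" by (auto simp: real_eigenvalues_def)
  qed
  also have "\<dots> \<longleftrightarrow> (p - m)*(u - m) = r^2"
  proof
    assume "\<exists>y1 y2. (y1 \<noteq> 0 \<or> y2 \<noteq> 0) \<and> p*y1 + r*y2 = m*y1 \<and> r*y1 + u*y2 = m*y2"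
    then obtain y1 y2 where h: "y1 \<noteq> 0 \<or> y2 \<noteq> 0" "p*y1 + r*y2 = m*y1" "r*y1 + u*y2 = m*y2" by blast
    have e1: "(p-m)*y1 = - r*y2" using h(2) by (simp add: algebra_simps)
    have e2: "r*y1 = -(u-m)*y2" using h(3) by (simp add: algebra_simps)
    have a: "((p-m)*(u-m) - r^2)*y1 = (u-m)*((p-m)*y1) - r*(r*y1)" by (simp add: algebra_simps power2_eq_square)
    also have "\<dots> = 0" unfolding e1 e2 by (simp add: algebra_simps)
    finally have A: "((p-m)*(u-m) - r^2)*y1 = 0" .
    have "((p-m)*(u-m) - r^2)*y2 = (p-m)*((u-m)*y2) - r*(r*y2)" by (simp add: algebra_simps power2_eq_square)
    also have "(u-m)*y2 = - (r*y1)" using e2 by (simp add: algebra_simps)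
    also have "r*y2 = - ((p-m)*y1)" using e1 by simp
    finally have B: "((p-m)*(u-m) - r^2)*y2 = 0" by (simp add: algebra_simps)
    show "(p - m)*(u - m) = r^2" using A B h(1) by auto
  next
    assume d: "(p - m)*(u - m) = r^2"
    show "\<exists>y1 y2. (y1 \<noteq> 0 \<or> y2 \<noteq> 0) \<and> p*y1 + r*y2 = m*y1 \<and> r*y1 + u*y2 = m*y2"
    proof (cases "r = 0")
      case False
      show ?thesis
        by (rule exI[of _ r], rule exI[of _ "m - p"]) (use False d in \<open>auto simp: algebra_simps power2_eq_square\<close>)
    next
      case True
      then have "p = m \<or> u = m" using d by simp
      then show ?thesis
      proof
        assume "p = m" then show ?thesis using True by (intro exI[of _ 1] exI[of _ 0]) simp
      next
        assume "u = m" then show ?thesis using True by (intro exI[of _ 0] exI[of _ 1]) simp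
      qed
    qed
  qed
  finally show ?thesis by (simp add: p_def r_def u_def)
qed

lemma eig_set:
  fixes M :: "real^2^2"
  assumes sym: "M$1$2 = M$2$1"
  defines "D \<equiv> sqrt ((M$1$1 - M$2$2)^2 + 4*(M$1$2)^2)"
  shows "real_eigenvalues M = {(M$1$1 + M$2$2 - D)/2, (M$1$1 + M$2$2 + D)/2}"
proof -
  define p where "p = M$1$1"
  define r where "r = M$1$2"
  define u where "u = M$2$2"
  have D2: "D^2 = (p-u)^2 + 4*r^2" unfolding D_def p_def u_def r_def by simp
  have "m \<in> real_eigenvalues M \<longleftrightarrow> m = (p+u-D)/2 \<or> m = (p+u+D)/2" for m
  proof -
    have "(p-m)*(u-m) - r^2 = ((2*m-(p+u)) - D)*((2*m-(p+u)) + D)/4"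
      using D2 by (simp add: algebra_simps power2_eq_square)
    then have "(p-m)*(u-m) = r^2 \<longleftrightarrow> ((2*m-(p+u)) - D)*((2*m-(p+u)) + D) = 0" by auto
    also have "\<dots> \<longleftrightarrow> m = (p+u-D)/2 \<or> m = (p+u+D)/2" by auto
    finally show ?thesis using eig_iff[OF sym] unfolding p_def r_def u_def by simp
  qed
  then show ?thesis unfolding p_def u_def by (intro set_eqI) simp
qed


lemma eig2:
  fixes M :: "real^2^2" and v :: "real^2"
  assumes sym: "M$1$2 = M$2$1" and v0: "v \<noteq> 0"
  defines "w \<equiv> vector [-(v$2), v$1] :: real^2"
  defines "n \<equiv> v \<bullet> v"
  defines "\<alpha> \<equiv> v \<bullet> (M *v v) / n" and "\<beta> \<equiv> v \<bullet> (M *v w) / n" and "\<gamma> \<equiv> w \<bullet> (M *v w) / n"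
  shows "lambda_min M = (\<alpha>+\<gamma> - sqrt((\<alpha>-\<gamma>)^2 + 4*\<beta>^2))/2"
    and "lambda_max M = (\<alpha>+\<gamma> + sqrt((\<alpha>-\<gamma>)^2 + 4*\<beta>^2))/2"
proof -
  define p where "p = M$1$1"
  define r where "r = M$1$2"
  define u where "u = M$2$2"
  have r2: "M$2$1 = r" using sym r_def by simp
  have n: "n = (v$1)^2 + (v$2)^2" unfolding n_def inner2 by (simp add: power2_eq_square)
  have npos: "n > 0" using v0 unfolding n_def by simp
  have a: "\<alpha> = (p*(v$1)^2 + 2*r*(v$1)*(v$2) + u*(v$2)^2)/n"
    unfolding \<alpha>_def inner2 mv2 p_def u_def r2 r_def[symmetric] by (simp add: algebra_simps power2_eq_square)
  have g: "\<gamma> = (p*(v$2)^2 - 2*r*(v$1)*(v$2) + u*(v$1)^2)/n"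
    unfolding \<gamma>_def inner2 mv2 w_def p_def u_def r2 r_def[symmetric] by (simp add: algebra_simps power2_eq_square)
  have b: "\<beta> = (-p*(v$1)*(v$2) + r*((v$1)^2 - (v$2)^2) + u*(v$1)*(v$2))/n"
    unfolding \<beta>_def inner2 mv2 w_def p_def u_def r2 r_def[symmetric] by (simp add: algebra_simps power2_eq_square)
  define X where "X = p*(v$1)^2 + 2*r*(v$1)*(v$2) + u*(v$2)^2 - (p*(v$2)^2 - 2*r*(v$1)*(v$2) + u*(v$1)^2)"
  define Y where "Y = -p*(v$1)*(v$2) + r*((v$1)^2 - (v$2)^2) + u*(v$1)*(v$2)"
  have "\<alpha> + \<gamma> = (p*(v$1)^2 + 2*r*(v$1)*(v$2) + u*(v$2)^2 + (p*(v$2)^2 - 2*r*(v$1)*(v$2) + u*(v$1)^2))/n"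
    unfolding a g by (metis add_divide_distrib)
  also have "\<dots> = ((p+u)*n)/n"
    by (rule arg_cong[where f="\<lambda>z. z/n"]) (simp add: n algebra_simps)
  also have "\<dots> = p + u" using npos by simp
  finally have tr: "\<alpha> + \<gamma> = p + u" .
  have amg: "\<alpha> - \<gamma> = X/n" unfolding a g X_def by (metis diff_divide_distrib)
  have bY: "\<beta> = Y/n" unfolding b Y_def by simp
  have "(\<alpha>-\<gamma>)^2 + 4*\<beta>^2 = (X^2 + 4*Y^2)/n^2"
    unfolding amg bY by (simp add: power_divide add_divide_distrib)
  also have "X^2 + 4*Y^2 = ((p-u)^2 + 4*r^2)*n^2"
    unfolding X_def Y_def n by algebra
  also have "((p-u)^2 + 4*r^2)*n^2/n^2 = (p-u)^2 + 4*r^2" using npos by simp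
  finally have dd: "(\<alpha>-\<gamma>)^2 + 4*\<beta>^2 = (p-u)^2 + 4*r^2" .
  have es: "real_eigenvalues M = {(p+u - sqrt((p-u)^2 + 4*r^2))/2, (p+u + sqrt((p-u)^2 + 4*r^2))/2}"
    using eig_set[OF sym] p_def u_def r_def by simp
  have le: "(p+u - sqrt((p-u)^2 + 4*r^2))/2 \<le> (p+u + sqrt((p-u)^2 + 4*r^2))/2" by simp
  show "lambda_min M = (\<alpha>+\<gamma> - sqrt((\<alpha>-\<gamma>)^2 + 4*\<beta>^2))/2"
    unfolding lambda_min_def es tr dd using le by (simp add: min_def)
  show "lambda_max M = (\<alpha>+\<gamma> + sqrt((\<alpha>-\<gamma>)^2 + 4*\<beta>^2))/2"
    unfolding lambda_max_def es tr dd using le by (simp add: max_def)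
qed



lemma sum_mv: "(\<Sum>q\<in>S. B q) *v (y::real^'n) = (\<Sum>q\<in>S. (B q :: real^'n^'m) *v y)"
proof (induction S rule: infinite_finite_induct)
  case (infinite S) then show ?case by (simp add: vec_eq_iff matrix_vector_mult_def)
next
  case empty then show ?case by (simp add: vec_eq_iff matrix_vector_mult_def)
next
  case (insert x F) then show ?case by (simp add: matrix_vector_mult_add_rdistrib)
qed

lemma qf_one:
  fixes a b l v :: "real^'n"
  shows "a \<bullet> ((c2 *\<^sub>R ((l \<bullet> l) *\<^sub>R mat 1 - outer l l) + c3 *\<^sub>R ((2 * (v \<bullet> l)) *\<^sub>R mat 1 - outer l v - outer v l)
     + c4 *\<^sub>R ((norm v)\<^sup>2 *\<^sub>R mat 1 - outer v v)) *v b)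
   = c2 * ((l \<bullet> l)*(a \<bullet> b) - (l \<bullet> b)*(a \<bullet> l)) + c3 * (2*(v \<bullet> l)*(a \<bullet> b) - (v \<bullet> b)*(a \<bullet> l) - (l \<bullet> b)*(a \<bullet> v))
     + c4 * ((v \<bullet> v)*(a \<bullet> b) - (v \<bullet> b)*(a \<bullet> v))"
  by (simp add: matrix_vector_mult_add_rdistrib matrix_vector_mult_diff_rdistrib
      scaleR_matrix_vector_assoc[symmetric] outer_mult inner_add_right inner_diff_right
      power2_norm_eq_inner algebra_simps)

lemma sym_sum:
  fixes l :: "nat \<Rightarrow> real^2" and v :: "real^2" and c2 c3 c4 :: "nat \<Rightarrow> real" and S :: "nat set"
  defines "M \<equiv> (\<Sum>q\<in>S. c2 q *\<^sub>R ((l q \<bullet> l q) *\<^sub>R mat 1 - outer (l q) (l q))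
            + c3 q *\<^sub>R ((2 * (v \<bullet> l q)) *\<^sub>R mat 1 - outer (l q) v - outer v (l q))
            + c4 q *\<^sub>R ((norm v)\<^sup>2 *\<^sub>R mat 1 - outer v v))"
  shows "M$1$2 = M$2$1"
  unfolding M_def by (simp add: outer_def mat_def algebra_simps)

lemma pperp_norm:
  fixes v y :: "real^'n" assumes "v \<noteq> 0"
  shows "(norm ((mat 1 - (1 / (norm v)\<^sup>2) *\<^sub>R outer v v) *v y))\<^sup>2 = y \<bullet> y - (v \<bullet> y)^2 / (v \<bullet> v)"
proof -
  have n: "v \<bullet> v > 0" using assms by simp
  have eq: "(mat 1 - (1 / (norm v)\<^sup>2) *\<^sub>R outer v v) *v y = y - ((v \<bullet> y) / (v \<bullet> v)) *\<^sub>R v"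
    by (simp add: matrix_vector_mult_diff_rdistrib scaleR_matrix_vector_assoc[symmetric] outer_mult power2_norm_eq_inner)
  have "(norm (y - ((v \<bullet> y) / (v \<bullet> v)) *\<^sub>R v))\<^sup>2 = y \<bullet> y - (v \<bullet> y)^2 / (v \<bullet> v)"
    unfolding power2_norm_eq_inner using n
    by (simp add: inner_diff_left inner_diff_right inner_commute field_simps power2_eq_square)
  then show ?thesis by (simp only: eq)
qed



lemma sqrt_gap:
  fixes \<delta> \<beta> :: real assumes "\<delta> > 0"
  shows "\<bar>(\<delta> - sqrt(\<delta>^2 + 4*\<beta>^2))/2\<bar> \<le> \<beta>^2/\<delta>"
proof -
  have s1: "\<delta> \<le> sqrt(\<delta>^2 + 4*\<beta>^2)" by (rule real_le_rsqrt) simp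
  have e: "(\<delta> + 2*\<beta>^2/\<delta>)^2 = \<delta>^2 + 4*\<beta>^2 + (2*\<beta>^2/\<delta>)^2"
    using assms by (simp add: power2_sum field_simps power2_eq_square)
  have s2: "sqrt(\<delta>^2 + 4*\<beta>^2) \<le> \<delta> + 2*\<beta>^2/\<delta>"
    by (rule real_le_lsqrt) (use assms e in auto)
  show ?thesis using s1 s2 by (simp add: abs_if field_simps)
qed

lemma aux: fixes S g a X :: real shows "S > 0 \<Longrightarrow> 1 + (g - S)/S + (-((a+g-X)/2 - a))/S = ((a+g+X)/2)/S"
  by (simp add: field_simps)

lemma asym:
  fixes \<alpha> \<beta> \<gamma> S :: "nat \<Rightarrow> real" and K1 K2 K3 a :: real
  assumes a: "a > 0"
    and A: "\<And>T. T \<ge> 1 \<Longrightarrow> \<bar>\<alpha> T\<bar> \<le> K1"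
    and B: "\<And>T. T \<ge> 1 \<Longrightarrow> \<bar>\<beta> T\<bar> \<le> K2 * (1 + ln (real T))"
    and G: "\<And>T. T \<ge> 1 \<Longrightarrow> \<bar>\<gamma> T - S T\<bar> \<le> K3 * (1 + ln (real T))"
    and S: "\<And>T. T \<ge> 1 \<Longrightarrow> S T \<ge> a * real T"
  shows "(\<lambda>T. (\<alpha> T + \<gamma> T - sqrt((\<alpha> T - \<gamma> T)^2 + 4*(\<beta> T)^2))/2 - \<alpha> T) \<longlonglongrightarrow> 0"
    and "(\<lambda>T. ((\<alpha> T + \<gamma> T + sqrt((\<alpha> T - \<gamma> T)^2 + 4*(\<beta> T)^2))/2) / S T) \<longlonglongrightarrow> 1"
proof -
  define h where "h = (\<lambda>T::nat. 1 + ln (real T))"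
  define f where "f = (\<lambda>T. (\<alpha> T + \<gamma> T - sqrt((\<alpha> T - \<gamma> T)^2 + 4*(\<beta> T)^2))/2 - \<alpha> T)"
  have K1: "K1 \<ge> 0" using A[of 1] by simp
  have h1: "h T \<ge> 1" if "T \<ge> 1" for T using that by (simp add: h_def)
  have K3: "K3 \<ge> 0" using G[of 1] h1[of 1] by (simp add: h_def)
  define K where "K = K3 + K1"
  have hT: "(\<lambda>T. h T / real T) \<longlonglongrightarrow> 0" unfolding h_def by real_asymp
  have hT2: "(\<lambda>T. (h T)^2 / real T) \<longlonglongrightarrow> 0" unfolding h_def by real_asymp
  have den: "(\<lambda>T. a - K * (h T / real T)) \<longlonglongrightarrow> a - K * 0"
    by (intro tendsto_intros hT)
  then have ev: "eventually (\<lambda>T. a - K * (h T / real T) > 0) sequentially"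
    using a by (intro order_tendstoD) auto
  define g where "g = (\<lambda>T. K2^2 * ((h T)^2 / real T) / (a - K * (h T / real T)))"
  have g0: "g \<longlonglongrightarrow> K2^2 * 0 / (a - K * 0)"
    unfolding g_def using a by (intro tendsto_intros hT hT2 den) auto
  have "eventually (\<lambda>T. norm (f T) \<le> g T) sequentially"
    using ev eventually_ge_at_top[of 1]
  proof eventually_elim
    case (elim T)
    have T: "real T \<ge> 1" using elim by simp
    define \<delta> where "\<delta> = \<gamma> T - \<alpha> T"
    have d1: "S T - K3 * h T - K1 \<le> \<delta>" using A[of T] G[of T] elim unfolding \<delta>_def h_def by auto
    have "K1 \<le> K1 * h T" using K1 h1[of T] elim by (metis mult_left_mono mult.right_neutral)
    then have d2: "a * T - K * h T \<le> S T - K3 * h T - K1" using S[of T] elim unfolding K_def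
      by (simp add: algebra_simps)
    have "a * T - K * h T \<le> \<delta>" using d1 d2 by linarith
    moreover have "real T * (a - K * (h T / real T)) = a * T - K * h T" using T by (simp add: field_simps)
    ultimately have dl: "\<delta> \<ge> real T * (a - K * (h T / real T))" by linarith
    have dp: "\<delta> > 0" using dl elim(1) T by (smt (verit) mult_pos_pos)
    have "f T = (\<delta> - sqrt(\<delta>^2 + 4*(\<beta> T)^2))/2"
      unfolding f_def \<delta>_def by (simp add: power2_commute field_simps)
    then have "norm (f T) \<le> (\<beta> T)^2 / \<delta>" using sqrt_gap[OF dp, of "\<beta> T"] by (simp only: real_norm_def)
    also have "\<dots> \<le> (K2 * h T)^2 / (real T * (a - K * (h T / real T)))"
    proof (rule frac_le)
      have "\<bar>\<beta> T\<bar> \<le> K2 * h T" using B[of T] elim unfolding h_def by simp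
      from power_mono[OF this abs_ge_zero, of 2] show "(\<beta> T)^2 \<le> (K2 * h T)^2" by simp
      show "0 \<le> (K2 * h T)^2" by simp
      show "0 < real T * (a - K * (h T / real T))" using elim(1) T by simp
      show "real T * (a - K * (h T / real T)) \<le> \<delta>" using dl .
    qed
    also have "\<dots> = g T" unfolding g_def by (simp add: power_mult_distrib divide_divide_eq_left)
    finally show ?case .
  qed
  moreover have "g \<longlonglongrightarrow> 0" using g0 by simp
  ultimately have f0: "f \<longlonglongrightarrow> 0" by (rule Lim_null_comparison)
  then show "(\<lambda>T. (\<alpha> T + \<gamma> T - sqrt((\<alpha> T - \<gamma> T)^2 + 4*(\<beta> T)^2))/2 - \<alpha> T) \<longlonglongrightarrow> 0"
    unfolding f_def .
  have r1: "(\<lambda>T. (\<gamma> T - S T) / S T) \<longlonglongrightarrow> 0"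
  proof (rule Lim_null_comparison)
    show "(\<lambda>T. K3 / a * (h T / real T)) \<longlonglongrightarrow> 0"
      using tendsto_mult[OF tendsto_const hT, of "K3/a"] by simp
    show "\<forall>\<^sub>F T in sequentially. norm ((\<gamma> T - S T) / S T) \<le> K3 / a * (h T / real T)"
      using eventually_ge_at_top[of 1]
    proof eventually_elim
      case (elim T)
      have Sp: "S T \<ge> a * T" "a * T > 0" using S[of T] elim a by auto
      have "norm ((\<gamma> T - S T) / S T) = \<bar>\<gamma> T - S T\<bar> / S T" using Sp by simp
      also have "\<dots> \<le> K3 * h T / (a * T)"
        by (rule frac_le) (use G[of T] elim Sp K3 h1[of T] in \<open>auto simp: h_def\<close>)
      also have "\<dots> = K3 / a * (h T / real T)" by simp
      finally show ?case .
    qed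
  qed
  have r2: "(\<lambda>T. - f T / S T) \<longlonglongrightarrow> 0"
  proof (rule Lim_null_comparison)
    show "(\<lambda>T. norm (f T) / a) \<longlonglongrightarrow> 0"
      using tendsto_divide_zero[OF tendsto_norm_zero[OF f0], of a] .
    show "\<forall>\<^sub>F T in sequentially. norm (- f T / S T) \<le> norm (f T) / a"
      using eventually_ge_at_top[of 1]
    proof eventually_elim
      case (elim T)
      have "a * 1 \<le> a * real T" using a elim by (intro mult_left_mono) auto
      then have Sp: "S T \<ge> a" using S[of T] elim by simp
      have "norm (- f T / S T) = norm (f T) / S T" using Sp a by (simp add: norm_divide)
      also have "\<dots> \<le> norm (f T) / a" using Sp a by (intro divide_left_mono) auto
      finally show ?case .
    qed
  qed
  have "(\<lambda>T. 1 + (\<gamma> T - S T) / S T + (- f T / S T)) \<longlonglongrightarrow> 1 + 0 + 0"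
    by (rule tendsto_add[OF tendsto_add[OF tendsto_const r1] r2])
  then have lim1: "(\<lambda>T. 1 + (\<gamma> T - S T) / S T + (- f T / S T)) \<longlonglongrightarrow> 1" by simp
  have ev2: "eventually (\<lambda>T. 1 + (\<gamma> T - S T) / S T + (- f T / S T) =
      ((\<alpha> T + \<gamma> T + sqrt((\<alpha> T - \<gamma> T)^2 + 4*(\<beta> T)^2))/2) / S T) sequentially"
    using eventually_ge_at_top[of 1]
  proof eventually_elim
    case (elim T)
    have "a \<le> a * real T" using mult_left_mono[of 1 "real T" a] a elim by simp
    then have Sp: "S T > 0" using S[of T] elim a by linarith
    show ?case unfolding f_def by (rule aux[OF Sp])
  qed
  show "(\<lambda>T. ((\<alpha> T + \<gamma> T + sqrt((\<alpha> T - \<gamma> T)^2 + 4*(\<beta> T)^2))/2) / S T) \<longlonglongrightarrow> 1"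
    by (rule Lim_transform_eventually[OF lim1 ev2])
qed


lemma inv_sq_sum_aux: "T \<ge> 1 \<Longrightarrow> (\<Sum>t=1..T. 1/(real t)^2) \<le> 2 - 1/real T"
proof (induction T rule: dec_induct)
  case base then show ?case by simp
next
  case (step n)
  have n: "real n \<ge> 1" using step by simp
  have "(\<Sum>t=1..Suc n. 1/(real t)^2) = (\<Sum>t=1..n. 1/(real t)^2) + 1/(real n + 1)^2" by simp
  also have "\<dots> \<le> 2 - 1/real n + 1/(real n + 1)^2" using step by simp
  also have "\<dots> \<le> 2 - 1/(real n + 1)"
  proof -
    have "1/(real n + 1)^2 \<le> 1/(real n * (real n + 1))" using n
      by (intro divide_left_mono) (auto simp: power2_eq_square)
    also have "\<dots> = 1/real n - 1/(real n + 1)" using n by (simp add: field_simps)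
    finally show ?thesis by simp
  qed
  finally show ?case by (simp add: add.commute)
qed

lemma inv_sq_sum: "(\<Sum>t=1..T. 1/(real t)^2) \<le> 2"
proof (cases "T \<ge> 1")
  case True
  have "0 \<le> 1/real T" by simp
  then show ?thesis using inv_sq_sum_aux[OF True] by linarith
qed simp

lemma harm_bound: "T \<ge> 1 \<Longrightarrow> (\<Sum>t=1..T. 1/real t) \<le> 1 + ln (real T)"
proof -
  assume "T \<ge> 1"
  then obtain m where m: "T = Suc m" by (cases T) auto
  have "harm (Suc m) - ln (real (Suc m)) \<le> harm (Suc 0) - ln (real (Suc 0))"
    using decseq_harm_diff_ln unfolding decseq_def by (metis zero_le antimonoD)
  then have "harm (Suc m) \<le> 1 + ln (real (Suc m))" by (simp add: harm_def)
  then show ?thesis using m by (simp add: harm_def divide_inverse)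
qed

lemma lower_c:
  fixes l v :: "'a::real_normed_vector"
  assumes v: "v \<noteq> 0" and nz: "\<And>t::nat. t \<ge> 1 \<Longrightarrow> l + real t *\<^sub>R v \<noteq> 0"
  shows "\<exists>c>0. \<forall>t::nat. t \<ge> 1 \<longrightarrow> c * real t \<le> norm (l + real t *\<^sub>R v)"
proof -
  define N where "N = nat \<lceil>2 * norm l / norm v\<rceil>"
  define F where "F = (\<lambda>t::nat. norm (l + real t *\<^sub>R v) / real t)"
  define c where "c = Min (insert (norm v / 2) (F ` {1..N}))"
  have nv: "norm v > 0" using v by simp
  have cpos: "c > 0" unfolding c_def
    using nv nz by (subst Min_gr_iff) (auto simp: F_def)
  have "c * real t \<le> norm (l + real t *\<^sub>R v)" if t: "t \<ge> 1" for t
  proof (cases "t \<le> N")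
    case True
    have "c \<le> F t" unfolding c_def using True t by (intro Min_le) auto
    then show ?thesis using t by (simp add: F_def field_simps)
  next
    case False
    then have "real t \<ge> 2 * norm l / norm v" unfolding N_def by linarith
    then have tl: "real t * norm v \<ge> 2 * norm l" using nv by (simp add: field_simps)
    have "c \<le> norm v / 2" unfolding c_def by (intro Min_le) auto
    then have "c * real t \<le> norm v / 2 * real t" by (intro mult_right_mono) auto
    also have "\<dots> \<le> real t * norm v - norm l"
    proof -
      have "norm v / 2 * real t = real t * norm v / 2" by simp
      then show ?thesis using tl by linarith
    qed
    also have "\<dots> = norm (real t *\<^sub>R v) - norm l" by simp
    also have "\<dots> \<le> norm (real t *\<^sub>R v + l)" by (rule norm_diff_ineq)
    also have "\<dots> = norm (l + real t *\<^sub>R v)" by (simp only: add.commute)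
    finally show ?thesis .
  qed
  then show ?thesis using cpos by blast
qed

lemma term_upper:
  fixes d t c :: real and k :: nat
  assumes "c > 0" "t \<ge> 1" "c * t \<le> d" "k \<le> 4"
  shows "t^k / d^4 \<le> 1 / (c^4 * t^(4-k))"
proof -
  have ct: "c * t > 0" using assms by simp
  have dp: "d > 0" using ct assms by linarith
  have "t^k / d^4 \<le> t^k / (c*t)^4"
    using assms ct dp by (intro divide_left_mono power_mono) auto
  also have "\<dots> = 1 / (c^4 * t^(4-k))"
  proof -
    have "t^4 = t^k * t^(4-k)" using assms(4) by (simp flip: power_add)
    then show ?thesis using ct dp assms by (simp add: power_mult_distrib field_simps)
  qed
  finally show ?thesis .
qed

lemma s_bounds:
  fixes l v :: "'a::real_normed_vector" and c :: real
  assumes c: "c > 0" and lc: "\<forall>t::nat. t \<ge> 1 \<longrightarrow> c * real t \<le> norm (l + real t *\<^sub>R v)"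
  defines "s \<equiv> \<lambda>T n. \<Sum>t=1..T. real t ^ n / (norm (l + real t *\<^sub>R v)) ^ 4"
  shows "0 \<le> s T n"
    and "s T 2 \<le> 2 / c^4"
    and "T \<ge> 1 \<Longrightarrow> s T 3 \<le> (1 + ln (real T)) / c^4"
    and "s T 4 \<ge> real T / (norm l + norm v)^4"
proof -
  show "0 \<le> s T n" unfolding s_def by (intro sum_nonneg) auto
  have "s T 2 \<le> (\<Sum>t=1..T. 1 / (c^4 * (real t)^2))"
    unfolding s_def using term_upper[OF c, of _ _ 2] lc by (intro sum_mono) auto
  also have "\<dots> = (\<Sum>t=1..T. 1 / (real t)^2) / c^4"
    by (simp add: sum_divide_distrib mult.commute)
  also have "\<dots> \<le> 2 / c^4" using c by (intro divide_right_mono inv_sq_sum) auto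
  finally show "s T 2 \<le> 2 / c^4" .
  show "s T 3 \<le> (1 + ln (real T)) / c^4" if T: "T \<ge> 1"
  proof -
    have "s T 3 \<le> (\<Sum>t=1..T. 1 / (c^4 * real t))"
      unfolding s_def using term_upper[OF c, of _ _ 3] lc by (intro sum_mono) auto
    also have "\<dots> = (\<Sum>t=1..T. 1 / real t) / c^4"
      by (simp add: sum_divide_distrib mult.commute)
    also have "\<dots> \<le> (1 + ln (real T)) / c^4" using c by (intro divide_right_mono harm_bound T) auto
    finally show ?thesis .
  qed
  define U where "U = norm l + norm v"
  have "(\<Sum>t=1..T. 1 / U^4) \<le> s T 4"
    unfolding s_def
  proof (intro sum_mono)
    fix t assume "t \<in> {1..T}"
    then have t: "real t \<ge> 1" by simp
    have "c * real t > 0" using c t by simp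
    moreover have "c * real t \<le> norm (l + real t *\<^sub>R v)" using lc t by simp
    ultimately have nz: "norm (l + real t *\<^sub>R v) > 0" by linarith
    have "norm (l + real t *\<^sub>R v) \<le> norm l + real t * norm v"
      using norm_triangle_ineq[of l "real t *\<^sub>R v"] t by simp
    also have "\<dots> \<le> real t * U"
    proof -
      have "norm l \<le> real t * norm l" using t mult_right_mono[of 1 "real t" "norm l"] by simp
      then show ?thesis unfolding U_def by (simp add: algebra_simps)
    qed
    finally have le: "norm (l + real t *\<^sub>R v) \<le> real t * U" .
    have pw: "(norm (l + real t *\<^sub>R v))^4 \<le> (real t * U)^4"
      using le nz by (intro power_mono) auto
    have tU: "real t * U > 0" using le nz by linarith
    have e: "1 / U^4 = real t ^ 4 / (real t * U)^4" using t by (simp add: power_mult_distrib)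
    have "real t ^ 4 / (real t * U)^4 \<le> real t ^ 4 / (norm (l + real t *\<^sub>R v))^4"
    proof (rule divide_left_mono[OF pw])
      show "0 < (real t * U) ^ 4 * norm (l + real t *\<^sub>R v) ^ 4" using nz tU by (metis mult_pos_pos zero_less_power)
    qed (use t in auto)
    then show "1 / U^4 \<le> real t ^ 4 / (norm (l + real t *\<^sub>R v))^4" using e by simp
  qed
  then show "s T 4 \<ge> real T / (norm l + norm v)^4" by (simp add: U_def)
qed


lemma comb_sum:
  fixes a b B C X Y :: "nat \<Rightarrow> real" and h :: real
  assumes "\<And>q. q \<in> S \<Longrightarrow> 0 \<le> a q \<and> a q \<le> B q"
    and "\<And>q. q \<in> S \<Longrightarrow> 0 \<le> b q \<and> b q \<le> C q * h" and h: "h \<ge> 1"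
  shows "\<bar>\<Sum>q\<in>S. a q * X q + b q * Y q\<bar> \<le> (\<Sum>q\<in>S. B q * \<bar>X q\<bar> + C q * \<bar>Y q\<bar>) * h"
proof -
  have "\<bar>\<Sum>q\<in>S. a q * X q + b q * Y q\<bar> \<le> (\<Sum>q\<in>S. \<bar>a q * X q + b q * Y q\<bar>)" by (rule sum_abs)
  also have "\<dots> \<le> (\<Sum>q\<in>S. (B q * \<bar>X q\<bar> + C q * \<bar>Y q\<bar>) * h)"
  proof (rule sum_mono)
    fix q assume q: "q \<in> S"
    have a: "0 \<le> a q" "a q \<le> B q" and b: "0 \<le> b q" "b q \<le> C q * h" using assms(1,2)[OF q] by auto
    have "\<bar>a q * X q\<bar> \<le> B q * \<bar>X q\<bar>" using a by (simp add: abs_mult mult_right_mono)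
    also have "\<dots> \<le> B q * \<bar>X q\<bar> * h"
    proof -
      have "0 \<le> B q * \<bar>X q\<bar>" using a by simp
      from mult_left_mono[OF h this] show ?thesis by simp
    qed
    finally have 1: "\<bar>a q * X q\<bar> \<le> B q * \<bar>X q\<bar> * h" .
    have "\<bar>b q * Y q\<bar> \<le> C q * h * \<bar>Y q\<bar>" using b by (simp add: abs_mult mult_right_mono)
    then have 2: "\<bar>b q * Y q\<bar> \<le> C q * \<bar>Y q\<bar> * h" by (simp add: mult_ac)
    have "\<bar>a q * X q + b q * Y q\<bar> \<le> \<bar>a q * X q\<bar> + \<bar>b q * Y q\<bar>" by (rule abs_triangle_ineq)
    also have "\<dots> \<le> (B q * \<bar>X q\<bar> + C q * \<bar>Y q\<bar>) * h" using 1 2 by (simp add: algebra_simps)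
    finally show "\<bar>a q * X q + b q * Y q\<bar> \<le> (B q * \<bar>X q\<bar> + C q * \<bar>Y q\<bar>) * h" .
  qed
  also have "\<dots> = (\<Sum>q\<in>S. B q * \<bar>X q\<bar> + C q * \<bar>Y q\<bar>) * h" by (simp add: sum_distrib_right)
  finally show ?thesis .
qed

theorem lemma6:
  fixes ob :: "nat \<Rightarrow> real^2" and x v :: "real^2" and Q :: nat
    and l :: "nat \<Rightarrow> real^2" and s :: "nat \<Rightarrow> nat \<Rightarrow> nat \<Rightarrow> real"
    and A :: "nat \<Rightarrow> real^2^2" and Pperp :: "real^2^2"
  assumes "Q \<ge> 1"
    and "v \<noteq> 0"
    and "\<forall>t::real. t \<ge> 1 \<longrightarrow> (\<forall>q\<in>{1..Q}. x + t *\<^sub>R v \<noteq> ob q)"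
  defines "l \<equiv> (\<lambda>q. x - ob q)"
    and "s \<equiv> (\<lambda>T q n. \<Sum>t=1..T. real t ^ n / (norm (l q + real t *\<^sub>R v)) ^ 4)"
    and "Pperp \<equiv> mat 1 - (1 / (norm v)\<^sup>2) *\<^sub>R outer v v"
    and "A \<equiv> (\<lambda>T. \<Sum>q=1..Q.
              s T q 2 *\<^sub>R ((l q \<bullet> l q) *\<^sub>R mat 1 - outer (l q) (l q))
            + s T q 3 *\<^sub>R ((2 * (v \<bullet> l q)) *\<^sub>R mat 1 - outer (l q) v - outer v (l q))
            + s T q 4 *\<^sub>R ((norm v)\<^sup>2 *\<^sub>R mat 1 - outer v v))"
  shows "((\<lambda>T. lambda_min (A T) - (\<Sum>q=1..Q. s T q 2 * (norm (Pperp *v l q))\<^sup>2))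
            \<longlonglongrightarrow> 0)
       \<and> ((\<lambda>T. lambda_max (A T) / (\<Sum>q=1..Q. s T q 4 * (norm v)\<^sup>2)) \<longlonglongrightarrow> 1)"
proof -
  have v0: "v \<noteq> 0" using assms(2) .
  define n where "n = v \<bullet> v"
  define w :: "real^2" where "w = vector [-(v$2), v$1]"
  have npos: "n > 0" using v0 by (simp add: n_def)
  have vw: "v \<bullet> w = 0" "w \<bullet> v = 0" "w \<bullet> w = n" unfolding w_def n_def inner2
    by (simp_all add: algebra_simps)
  have nv2: "(norm v)^2 = n" by (simp add: n_def power2_norm_eq_inner)
  have nvv: "norm v * norm v = n" using nv2 by (simp add: power2_eq_square)
  have nz: "l q + real t *\<^sub>R v \<noteq> 0" if q: "q \<in> {1..Q}" and t: "(t::nat) \<ge> 1" for q t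
  proof
    assume eq: "l q + real t *\<^sub>R v = 0"
    have "x + real t *\<^sub>R v - ob q = 0" using eq unfolding l_def by (simp add: algebra_simps)
    then have "x + real t *\<^sub>R v = ob q" by simp
    moreover have "real t \<ge> 1" using t by simp
    ultimately show False using assms(3) q by blast
  qed
  have "\<forall>q\<in>{1..Q}. \<exists>c>0. \<forall>t::nat. t \<ge> 1 \<longrightarrow> c * real t \<le> norm (l q + real t *\<^sub>R v)"
    using lower_c[OF v0] nz by blast
  then obtain c where c: "\<And>q. q \<in> {1..Q} \<Longrightarrow> c q > 0 \<and> (\<forall>t::nat. t \<ge> 1 \<longrightarrow> c q * real t \<le> norm (l q + real t *\<^sub>R v))"
    by metis
  have s_nn: "0 \<le> s T q k" for T q k unfolding s_def by (intro sum_nonneg) auto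
  have s2b: "s T q 2 \<le> 2 / (c q)^4" if q: "q \<in> {1..Q}" for T q
    using s_bounds(2)[of "c q" "l q" v T] c[OF q] unfolding s_def by blast
  have s3b: "s T q 3 \<le> 1 / (c q)^4 * (1 + ln (real T))" if q: "q \<in> {1..Q}" and T: "T \<ge> 1" for T q
    using s_bounds(3)[of "c q" "l q" v T] c[OF q] T unfolding s_def by simp
  have s4b: "s T q 4 \<ge> real T / (norm (l q) + norm v)^4" if q: "q \<in> {1..Q}" for T q
    using s_bounds(4)[of "c q" "l q" v T] c[OF q] unfolding s_def by blast
  have qf: "a \<bullet> (A T *v b) = (\<Sum>q=1..Q. s T q 2 * ((l q \<bullet> l q)*(a \<bullet> b) - (l q \<bullet> b)*(a \<bullet> l q))
      + s T q 3 * (2*(v \<bullet> l q)*(a \<bullet> b) - (v \<bullet> b)*(a \<bullet> l q) - (l q \<bullet> b)*(a \<bullet> v))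
      + s T q 4 * ((v \<bullet> v)*(a \<bullet> b) - (v \<bullet> b)*(a \<bullet> v)))" for T a b
    unfolding A_def sum_mv inner_sum_right qf_one ..
  have sym: "(A T)$1$2 = (A T)$2$1" for T unfolding A_def by (rule sym_sum)
  define \<alpha> where "\<alpha> = (\<lambda>T. v \<bullet> (A T *v v) / (v \<bullet> v))"
  define \<beta> where "\<beta> = (\<lambda>T. v \<bullet> (A T *v w) / (v \<bullet> v))"
  define \<gamma> where "\<gamma> = (\<lambda>T. w \<bullet> (A T *v w) / (v \<bullet> v))"
  define S where "S = (\<lambda>T. \<Sum>q=1..Q. s T q 4 * (norm v)\<^sup>2)"
  have lmin: "lambda_min (A T) = (\<alpha> T + \<gamma> T - sqrt((\<alpha> T - \<gamma> T)^2 + 4*(\<beta> T)^2))/2" for T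
    using eig2(1)[OF sym v0] unfolding \<alpha>_def \<beta>_def \<gamma>_def w_def by simp
  have lmax: "lambda_max (A T) = (\<alpha> T + \<gamma> T + sqrt((\<alpha> T - \<gamma> T)^2 + 4*(\<beta> T)^2))/2" for T
    using eig2(2)[OF sym v0] unfolding \<alpha>_def \<beta>_def \<gamma>_def w_def by simp
  define P where "P = (\<lambda>q. (norm (Pperp *v l q))\<^sup>2)"
  have P: "P q = l q \<bullet> l q - (v \<bullet> l q)^2 / n" for q
    unfolding P_def Pperp_def n_def by (rule pperp_norm[OF v0])
  have \<alpha>e: "\<alpha> T = (\<Sum>q=1..Q. s T q 2 * P q)" for T
    unfolding \<alpha>_def qf sum_divide_distrib n_def[symmetric]
    by (rule sum.cong[OF refl]) (use npos in \<open>simp add: P vw nv2 inner_commute field_simps power2_eq_square\<close>)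
  have \<beta>e: "\<beta> T = (\<Sum>q=1..Q. s T q 2 * (- ((l q \<bullet> w)*(v \<bullet> l q)) / n) + s T q 3 * (- (l q \<bullet> w)))" for T
    unfolding \<beta>_def qf sum_divide_distrib n_def[symmetric]
    by (rule sum.cong[OF refl]) (use npos in \<open>simp add: P vw nv2 inner_commute field_simps power2_eq_square\<close>)
  have \<gamma>e: "\<gamma> T - S T = (\<Sum>q=1..Q. s T q 2 * (((l q \<bullet> l q)*n - (l q \<bullet> w)^2) / n) + s T q 3 * (2 * (v \<bullet> l q)))" for T
  proof -
    have "\<gamma> T = (\<Sum>q=1..Q. s T q 2 * (((l q \<bullet> l q)*n - (l q \<bullet> w)^2) / n) + s T q 3 * (2 * (v \<bullet> l q)) + s T q 4 * (norm v)\<^sup>2)"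
      unfolding \<gamma>_def qf sum_divide_distrib n_def[symmetric]
      by (rule sum.cong[OF refl]) (use npos in \<open>simp add: vw nv2 nvv inner_commute field_simps power2_eq_square\<close>)
    then show ?thesis unfolding S_def by (simp add: sum_subtractf[symmetric])
  qed
  define h where "h = (\<lambda>T::nat. 1 + ln (real T))"
  have h1: "h T \<ge> 1" if "T \<ge> 1" for T using that by (simp add: h_def)
  have Pnn: "P q \<ge> 0" for q unfolding P_def by simp
  define K1 where "K1 = (\<Sum>q=1..Q. 2 / (c q)^4 * \<bar>P q\<bar> + 0 * \<bar>0\<bar>)"
  have A1: "\<bar>\<alpha> T\<bar> \<le> K1" for T
  proof -
    have "\<bar>\<Sum>q=1..Q. s T q 2 * P q + 0 * 0\<bar> \<le> K1 * 1" unfolding K1_def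
      by (rule comb_sum) (use s_nn s2b in auto)
    then show ?thesis unfolding \<alpha>e by simp
  qed
  define K2 where "K2 = (\<Sum>q=1..Q. 2 / (c q)^4 * \<bar>- ((l q \<bullet> w)*(v \<bullet> l q)) / n\<bar> + 1 / (c q)^4 * \<bar>- (l q \<bullet> w)\<bar>)"
  have B1: "\<bar>\<beta> T\<bar> \<le> K2 * (1 + ln (real T))" if T: "T \<ge> 1" for T
    unfolding \<beta>e K2_def
    by (rule comb_sum) (use s_nn s2b s3b T in auto)
  define K3 where "K3 = (\<Sum>q=1..Q. 2 / (c q)^4 * \<bar>((l q \<bullet> l q)*n - (l q \<bullet> w)^2) / n\<bar> + 1 / (c q)^4 * \<bar>2 * (v \<bullet> l q)\<bar>)"
  have G1: "\<bar>\<gamma> T - S T\<bar> \<le> K3 * (1 + ln (real T))" if T: "T \<ge> 1" for T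
    unfolding \<gamma>e K3_def
    by (rule comb_sum) (use s_nn s2b s3b T in auto)
  define a where "a = n / (norm (l 1) + norm v)^4"
  have apos: "a > 0"
  proof -
    have "norm (l 1) + norm v > 0" using v0 by (simp add: add_nonneg_pos)
    then show ?thesis unfolding a_def using npos by simp
  qed
  have S1: "S T \<ge> a * real T" if T: "T \<ge> 1" for T
  proof -
    have q1: "(1::nat) \<in> {1..Q}" using assms(1) by simp
    have "a * real T = real T / (norm (l 1) + norm v)^4 * (norm v)\<^sup>2" unfolding a_def nv2 by simp
    also have "\<dots> \<le> s T 1 4 * (norm v)\<^sup>2" using s4b[OF q1, of T] by (intro mult_right_mono) auto
    also have "\<dots> \<le> S T" unfolding S_def
      by (rule member_le_sum[OF q1]) (use s_nn in auto)
    finally show ?thesis .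
  qed
  note as = asym[where \<alpha>=\<alpha> and \<beta>=\<beta> and \<gamma>=\<gamma> and S=S and ?K1.0=K1 and ?K2.0=K2 and ?K3.0=K3 and a=a]
  have as1: "(\<lambda>T. (\<alpha> T + \<gamma> T - sqrt((\<alpha> T - \<gamma> T)^2 + 4*(\<beta> T)^2))/2 - \<alpha> T) \<longlonglongrightarrow> 0"
    by (rule as(1)) (use apos A1 B1 G1 S1 in auto)
  have as2: "(\<lambda>T. ((\<alpha> T + \<gamma> T + sqrt((\<alpha> T - \<gamma> T)^2 + 4*(\<beta> T)^2))/2) / S T) \<longlonglongrightarrow> 1"
    by (rule as(2)) (use apos A1 B1 G1 S1 in auto)
  have eq1: "lambda_min (A T) - (\<Sum>q=1..Q. s T q 2 * (norm (Pperp *v l q))\<^sup>2)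
      = (\<alpha> T + \<gamma> T - sqrt((\<alpha> T - \<gamma> T)^2 + 4*(\<beta> T)^2))/2 - \<alpha> T" for T
    unfolding lmin \<alpha>e[of T] P_def ..
  have eq2: "lambda_max (A T) / (\<Sum>q=1..Q. s T q 4 * (norm v)\<^sup>2)
      = ((\<alpha> T + \<gamma> T + sqrt((\<alpha> T - \<gamma> T)^2 + 4*(\<beta> T)^2))/2) / S T" for T
    unfolding lmax S_def ..
  show ?thesis unfolding eq1 eq2 using as1 as2 by blast
qed

end
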